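(* Let $Q$ be a $\partial_\psi$-delta operator with $\partial_\psi$-basic polynomial sequence $(q_n)$, let $S\in\Sigma_\psi$ be invertible and let $(s_n)$, $s_n=S^{-1}q_n$, be the Sheffer $\psi$-polynomials of $Q$ relative to $S$. Then for every $T\in\Sigma_\psi$, every $p\in P$ and every $y\in F$, $$T\,p(x+_\psi y)=\sum_{k\ge0}\frac{s_k(y)}{k_\psi!}\,Q^k\,S\,T\,p(x),$$ where $p(x+_\psi y):=(E^y(\partial_\psi)p)(x)$ and operators act in the variable $x$.
   Context: Let $F$ be a field of characteristic $0$, $P=F[x]$. Fix $(\psi_n)_{n\ge0}$ in $F$ with $\psi_0=1$, $\psi_n\ne0$, $\psi_{-1}=0$; $n_\psi=\psi_{n-1}/\psi_n$, $n_\psi!=1/\psi_n$, $0_\psi!=1$. $\partial_\psi x^n=n_\psi x^{n-1}$ (linear); $E^a(\partial_\psi)=\sum_k\frac{a^k}{k_\psi!}\partial_\psi^k$. $\Sigma_\psi$: algebra of linear operators on $P$ commuting with all $E^a(\partial_\psi)$. A $\partial_\psi$-delta operator is $Q\in\Sigma_\psi$ with $Q(x)$ a nonzero constant; its $\partial_\psi$-basic sequence: $\deg q_n=n$, $q_0=1$, $q_n(0)=0$ for $n>0$, $Qq_n=n_\psi q_{n-1}$. Sheffer $\psi$-polynomials of $Q$: $\deg s_n=n$, $s_0$ a nonzero constant, $Qs_n=n_\psi s_{n-1}$. *)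

theory Defs
  imports "HOL-Computational_Algebra.Polynomial"
begin

text \<open>The sequence psi is a function nat => 'a with psi 0 = 1 and psi n nonzero;
  psi (-1) = 0 is encoded by making the psi-number of 0 equal to 0.\<close>

definition psi_seq :: "(nat \<Rightarrow> 'a::field_char_0) \<Rightarrow> bool" where
  "psi_seq psi \<longleftrightarrow> psi 0 = 1 \<and> (\<forall>n. psi n \<noteq> 0)"

definition npsi :: "(nat \<Rightarrow> 'a::field_char_0) \<Rightarrow> nat \<Rightarrow> 'a" where
  "npsi psi n = (if n = 0 then 0 else psi (n - 1) / psi n)"

definition factpsi :: "(nat \<Rightarrow> 'a::field_char_0) \<Rightarrow> nat \<Rightarrow> 'a" where
  "factpsi psi n = 1 / psi n"

definition dpsi :: "(nat \<Rightarrow> 'a::field_char_0) \<Rightarrow> 'a poly \<Rightarrow> 'a poly" where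
  "dpsi psi p = (\<Sum>n\<le>degree p. monom (coeff p n * npsi psi n) (n - 1))"

text \<open>E^a(dpsi) = sum_k a^k / k_psi! dpsi^k; the sum is finite on each polynomial
  since dpsi^k p = 0 for k > degree p.\<close>
definition Epsi :: "(nat \<Rightarrow> 'a::field_char_0) \<Rightarrow> 'a \<Rightarrow> 'a poly \<Rightarrow> 'a poly" where
  "Epsi psi a p = (\<Sum>k\<le>degree p. smult (a ^ k / factpsi psi k) ((dpsi psi ^^ k) p))"

definition lin_op :: "('a::field_char_0 poly \<Rightarrow> 'a poly) \<Rightarrow> bool" where
  "lin_op L \<longleftrightarrow> (\<forall>p q. L (p + q) = L p + L q) \<and> (\<forall>c p. L (smult c p) = smult c (L p))"

definition Sigma_psi :: "(nat \<Rightarrow> 'a::field_char_0) \<Rightarrow> ('a poly \<Rightarrow> 'a poly) \<Rightarrow> bool" where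
  "Sigma_psi psi T \<longleftrightarrow> lin_op T \<and> (\<forall>a p. T (Epsi psi a p) = Epsi psi a (T p))"

definition delta_op :: "(nat \<Rightarrow> 'a::field_char_0) \<Rightarrow> ('a poly \<Rightarrow> 'a poly) \<Rightarrow> bool" where
  "delta_op psi Q \<longleftrightarrow> Sigma_psi psi Q \<and> (\<exists>c. c \<noteq> 0 \<and> Q [:0, 1:] = [:c:])"

definition basic_seq :: "(nat \<Rightarrow> 'a::field_char_0) \<Rightarrow> ('a poly \<Rightarrow> 'a poly) \<Rightarrow> (nat \<Rightarrow> 'a poly) \<Rightarrow> bool" where
  "basic_seq psi Q q \<longleftrightarrow>
     (\<forall>n. degree (q n) = n) \<and> q 0 = 1 \<and> (\<forall>n>0. poly (q n) 0 = 0) \<and>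
     (\<forall>n. Q (q n) = smult (npsi psi n) (q (n - 1)))"

end

theory Submission
  imports Defs
begin

lemma lin_add: "lin_op L \<Longrightarrow> L (a + b) = L a + L b"
  by (simp add: lin_op_def)

lemma lin_smult: "lin_op L \<Longrightarrow> L (smult c a) = smult c (L a)"
  by (simp add: lin_op_def)

lemma lin_zero: "lin_op L \<Longrightarrow> L 0 = 0"
  using lin_smult[of L 0 0] by simp

lemma lin_sum: "lin_op L \<Longrightarrow> L (sum f A) = (\<Sum>x\<in>A. L (f x))"
proof (induction A rule: infinite_finite_induct)
  case (infinite A) then show ?case by (simp add: lin_zero)
next
  case empty then show ?case by (simp add: lin_zero)
next
  case (insert x F) then show ?case by (simp add: lin_add)
qed

lemma lin_pow: "lin_op L \<Longrightarrow> lin_op (L ^^ k)"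
  by (induction k) (auto simp: lin_op_def)

lemma comm_pow: "(\<And>r. L (M r) = M (L r)) \<Longrightarrow> L ((M ^^ k) r) = (M ^^ k) (L r)"
  by (induction k) auto

lemma coeff_dpsi: "coeff (dpsi psi R) m = coeff R (Suc m) * npsi psi (Suc m)"
proof -
  have "coeff (dpsi psi R) m = (\<Sum>n\<le>degree R. if n - 1 = m then coeff R n * npsi psi n else 0)"
    unfolding dpsi_def coeff_sum coeff_monom by (intro sum.cong) auto
  also have "\<dots> = (\<Sum>n\<in>{..degree R} \<inter> {Suc m}. coeff R n * npsi psi n)"
    by (rule sum.mono_neutral_cong_right) (auto simp: npsi_def)
  also have "\<dots> = coeff R (Suc m) * npsi psi (Suc m)"
    by (cases "Suc m \<le> degree R") (auto simp: coeff_eq_0)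
  finally show ?thesis .
qed

lemma coeff_dpsi_pow:
  "coeff ((dpsi psi ^^ k) R) m = coeff R (m + k) * (\<Prod>i<k. npsi psi (m + Suc i))"
proof (induction k arbitrary: m)
  case 0 then show ?case by simp
next
  case (Suc k)
  have "coeff ((dpsi psi ^^ Suc k) R) m = coeff ((dpsi psi ^^ k) R) (Suc m) * npsi psi (Suc m)"
    by (simp add: coeff_dpsi)
  also have "\<dots> = coeff R (m + Suc k) * (\<Prod>i<Suc k. npsi psi (m + Suc i))"
    unfolding Suc prod.lessThan_Suc_shift by simp
  finally show ?case .
qed

lemma prod_npsi: "psi_seq psi \<Longrightarrow> (\<Prod>i<k. npsi psi (Suc i)) = 1 / psi k"
  by (induction k) (auto simp: psi_seq_def npsi_def)

lemma eval_E: assumes "psi_seq psi" shows "poly (Epsi psi y R) 0 = poly R y"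
proof -
  have "poly (Epsi psi y R) 0 = (\<Sum>k\<le>degree R. y ^ k / factpsi psi k * (coeff R k * (1 / psi k)))"
    unfolding Epsi_def poly_0_coeff_0 coeff_sum coeff_smult coeff_dpsi_pow
    using prod_npsi[OF assms] by simp
  also have "\<dots> = (\<Sum>k\<le>degree R. coeff R k * y ^ k)"
    using assms by (intro sum.cong) (auto simp: factpsi_def psi_seq_def)
  finally show ?thesis by (simp add: poly_altdef)
qed


locale ctx =
  fixes psi :: "nat \<Rightarrow> 'a::field_char_0" and Q :: "'a poly \<Rightarrow> 'a poly" and q :: "nat \<Rightarrow> 'a poly"
  assumes ps: "psi_seq psi" and QS: "Sigma_psi psi Q" and bs: "basic_seq psi Q q"
begin

lemma Qlin: "lin_op Q" using QS by (simp add: Sigma_psi_def)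
lemma QE: "Q (Epsi psi a r) = Epsi psi a (Q r)" using QS by (simp add: Sigma_psi_def)
lemma QpowE: "(Q ^^ k) (Epsi psi a r) = Epsi psi a ((Q ^^ k) r)"
  by (rule comm_pow[symmetric]) (simp add: QE)
lemma Qq: "Q (q n) = smult (npsi psi n) (q (n - 1))" using bs by (simp add: basic_seq_def)
lemma degq: "degree (q n) = n" using bs by (simp add: basic_seq_def)
lemma q0: "q 0 = 1" using bs by (simp add: basic_seq_def)
lemma qz: "n > 0 \<Longrightarrow> poly (q n) 0 = 0" using bs by (simp add: basic_seq_def)
lemma fne: "factpsi psi k \<noteq> 0" using ps by (simp add: factpsi_def psi_seq_def)

lemma Qpow_q: "(Q ^^ k) (q n) = (if k \<le> n then smult (\<Prod>i<k. npsi psi (n - i)) (q (n - k)) else 0)"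
proof (induction k)
  case 0 then show ?case by simp
next
  case (Suc k)
  show ?case
  proof (cases "Suc k \<le> n")
    case True
    then show ?thesis using Suc
      by (simp add: lin_smult[OF Qlin] Qq prod.lessThan_Suc mult.commute)
  next
    case False
    show ?thesis
    proof (cases "k = n")
      case True
      then show ?thesis using Suc by (simp add: lin_smult[OF Qlin] Qq npsi_def)
    next
      case False
      then show ?thesis using Suc \<open>\<not> Suc k \<le> n\<close> by (simp add: lin_zero[OF Qlin])
    qed
  qed
qed

lemma Qpow_q_eval: "poly ((Q ^^ k) (q n)) 0 = (if k = n then factpsi psi n else 0)"
proof -
  have "(\<Prod>i<n. npsi psi (n - i)) = (\<Prod>i<n. npsi psi (Suc i))"
  proof -
    have "(\<Prod>i<n. npsi psi (n - i)) = (\<Prod>i<n. npsi psi (Suc (n - Suc i)))"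
      by (intro prod.cong) (auto simp: Suc_diff_Suc)
    also have "\<dots> = (\<Prod>i<n. npsi psi (Suc i))"
      by (rule prod.nat_diff_reindex[where g = "\<lambda>i. npsi psi (Suc i)"])
    finally show ?thesis .
  qed
  then show ?thesis
    using prod_npsi[OF ps, of n] qz[of "n - k"]
    by (auto simp: Qpow_q q0 factpsi_def)
qed

lemma span: "degree r \<le> n \<Longrightarrow> \<exists>d. r = (\<Sum>j\<le>n. smult (d j) (q j))"
proof (induction n arbitrary: r)
  case 0
  then obtain c where "r = [:c:]" using degree_0_id[of r] 0 by (metis le_zero_eq)
  then have "r = (\<Sum>j\<le>0. smult ((\<lambda>_. c) j) (q j))" by (simp add: q0)
  then show ?case by (intro exI[of _ "\<lambda>_. c"])
next
  case (Suc n)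
  define c where "c = coeff r (Suc n) / lead_coeff (q (Suc n))"
  have lq: "lead_coeff (q (Suc n)) \<noteq> 0"
    using degq[of "Suc n"] by (metis leading_coeff_0_iff nat.simps(3) degree_0)
  define r' where "r' = r - smult c (q (Suc n))"
  have dr': "degree r' \<le> Suc n" unfolding r'_def
    using Suc.prems degq[of "Suc n"] by (simp add: degree_diff_le)
  have cr': "coeff r' (Suc n) = 0" unfolding r'_def c_def using lq degq[of "Suc n"] by simp
  have "degree r' \<le> n"
  proof (rule ccontr)
    assume "\<not> degree r' \<le> n"
    then have "degree r' = Suc n" using dr' by simp
    then show False using cr' by (metis leading_coeff_0_iff nat.simps(3) degree_0)
  qed
  then obtain d where d: "r' = (\<Sum>j\<le>n. smult (d j) (q j))" using Suc.IH by blast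
  define d' where "d' j = (if j = Suc n then c else d j)" for j
  have "r = (\<Sum>j\<le>n. smult (d' j) (q j)) + smult (d' (Suc n)) (q (Suc n))"
    using d unfolding r'_def d'_def by (simp add: algebra_simps)
  then have "r = (\<Sum>j\<le>Suc n. smult (d' j) (q j))" by simp
  then show ?case by blast
qed

lemma expand:
  assumes "degree r \<le> M"
  shows "r = (\<Sum>j\<le>M. smult (poly ((Q ^^ j) r) 0 / factpsi psi j) (q j))"
proof -
  obtain d where d: "r = (\<Sum>j\<le>M. smult (d j) (q j))" using span[OF assms] by blast
  have ev: "poly ((Q ^^ k) r) 0 = d k * factpsi psi k" if "k \<le> M" for k
  proof -
    have "poly ((Q ^^ k) r) 0 = (\<Sum>j\<le>M. d j * (if k = j then factpsi psi j else 0))"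
      by (subst d) (simp add: lin_sum[OF lin_pow[OF Qlin]] lin_smult[OF lin_pow[OF Qlin]]
          poly_sum Qpow_q_eval)
    also have "\<dots> = d k * factpsi psi k"
      using that by (simp add: if_distrib[of "\<lambda>x. _ * x"] sum.delta cong: if_cong)
    finally show ?thesis .
  qed
  show ?thesis
    by (subst d, rule sum.cong) (auto simp: ev fne)
qed

lemma vanish: "degree r < k \<Longrightarrow> (Q ^^ k) r = 0"
proof -
  assume a: "degree r < k"
  obtain d where d: "r = (\<Sum>j\<le>degree r. smult (d j) (q j))" using span[of r "degree r"] by blast
  show ?thesis
    by (subst d) (use a in \<open>auto simp: lin_sum[OF lin_pow[OF Qlin]] lin_smult[OF lin_pow[OF Qlin]] Qpow_q intro!: sum.neutral\<close>)
qed

lemma uniq: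
  assumes "\<And>m. poly ((Q ^^ m) A) 0 = poly ((Q ^^ m) B) 0"
  shows "A = B"
proof -
  define M where "M = max (degree A) (degree B)"
  have "A = (\<Sum>j\<le>M. smult (poly ((Q ^^ j) A) 0 / factpsi psi j) (q j))"
    by (rule expand) (simp add: M_def)
  also have "\<dots> = (\<Sum>j\<le>M. smult (poly ((Q ^^ j) B) 0 / factpsi psi j) (q j))"
    by (simp add: assms)
  also have "\<dots> = B" by (rule expand[symmetric]) (simp add: M_def)
  finally show ?thesis .
qed

lemma expansion_thm:
  assumes U: "Sigma_psi psi U" and M: "degree r \<le> M"
  shows "U r = (\<Sum>j\<le>M. smult (poly (U (q j)) 0 / factpsi psi j) ((Q ^^ j) r))"
proof -
  have Ul: "lin_op U" and UE: "\<And>a p. U (Epsi psi a p) = Epsi psi a (U p)"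
    using U by (auto simp: Sigma_psi_def)
  have "poly (U r) y = poly (\<Sum>j\<le>M. smult (poly (U (q j)) 0 / factpsi psi j) ((Q ^^ j) r)) y" for y
  proof -
    define N where "N = max M (degree (Epsi psi y r))"
    have "poly (U r) y = poly (U (Epsi psi y r)) 0" by (simp add: UE eval_E[OF ps])
    also have "Epsi psi y r = (\<Sum>j\<le>N. smult (poly ((Q ^^ j) (Epsi psi y r)) 0 / factpsi psi j) (q j))"
      by (rule expand) (simp add: N_def)
    also have "poly (U \<dots>) 0 = (\<Sum>j\<le>N. poly ((Q ^^ j) r) y / factpsi psi j * poly (U (q j)) 0)"
      by (simp add: lin_sum[OF Ul] lin_smult[OF Ul] poly_sum QpowE eval_E[OF ps])
    also have "\<dots> = (\<Sum>j\<le>M. poly ((Q ^^ j) r) y / factpsi psi j * poly (U (q j)) 0)"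
      by (rule sum.mono_neutral_right) (use M in \<open>auto simp: N_def vanish\<close>)
    also have "\<dots> = poly (\<Sum>j\<le>M. smult (poly (U (q j)) 0 / factpsi psi j) ((Q ^^ j) r)) y"
      by (simp add: poly_sum mult_ac)
    finally show ?thesis .
  qed
  then show ?thesis by (subst poly_eq_poly_eq_iff[symmetric]) (rule ext)
qed

lemma commute:
  assumes U: "Sigma_psi psi U"
  shows "U (Q r) = Q (U r)"
proof -
  define M where "M = degree r + degree (Q r)"
  have "U (Q r) = (\<Sum>j\<le>M. smult (poly (U (q j)) 0 / factpsi psi j) ((Q ^^ j) (Q r)))"
    by (rule expansion_thm[OF U]) (simp add: M_def)
  also have "\<dots> = Q (\<Sum>j\<le>M. smult (poly (U (q j)) 0 / factpsi psi j) ((Q ^^ j) r))"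
    by (simp add: lin_sum[OF Qlin] lin_smult[OF Qlin] funpow_swap1)
  also have "\<dots> = Q (U r)"
    by (subst expansion_thm[OF U, of r M]) (simp_all add: M_def)
  finally show ?thesis .
qed

end


theorem mainTheorem15:
  fixes psi :: "nat \<Rightarrow> 'a::field_char_0"
    and Q S Sinv T :: "'a poly \<Rightarrow> 'a poly"
    and q :: "nat \<Rightarrow> 'a poly"
    and p :: "'a poly" and y :: 'a
  assumes "psi_seq psi"
    and "delta_op psi Q"
    and "basic_seq psi Q q"
    and "Sigma_psi psi S"
    and "\<And>r. Sinv (S r) = r" and "\<And>r. S (Sinv r) = r"
    and "Sigma_psi psi T"
  shows "let s = (\<lambda>n. Sinv (q n));
             term = (\<lambda>k. smult (poly (s k) y / factpsi psi k) ((Q ^^ k) (S (T p))))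
         in finite {k. term k \<noteq> 0} \<and> T (Epsi psi y p) = (\<Sum>k | term k \<noteq> 0. term k)"
proof -
  note SS = assms(4) and inv1 = assms(5) and inv2 = assms(6)
  interpret ctx psi Q q
    using assms(1,2,3) by unfold_locales (auto simp: delta_op_def)
  have Sl: "lin_op S" using SS by (simp add: Sigma_psi_def)
  have Tl: "lin_op T" and TE: "\<And>a r. T (Epsi psi a r) = Epsi psi a (T r)"
    using assms(7) by (auto simp: Sigma_psi_def)
  have Sil: "lin_op Sinv"
    unfolding lin_op_def
  proof (intro conjI allI)
    fix a b show "Sinv (a + b) = Sinv a + Sinv b"
    proof -
      have "Sinv (a + b) = Sinv (S (Sinv a) + S (Sinv b))" by (simp add: inv2)
      also have "\<dots> = Sinv (S (Sinv a + Sinv b))" by (simp add: lin_add[OF Sl])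
      finally show ?thesis by (simp add: inv1)
    qed
  next
    fix c a show "Sinv (smult c a) = smult c (Sinv a)"
    proof -
      have "Sinv (smult c a) = Sinv (smult c (S (Sinv a)))" by (simp add: inv2)
      also have "\<dots> = Sinv (S (smult c (Sinv a)))" by (simp add: lin_smult[OF Sl])
      finally show ?thesis by (simp add: inv1)
    qed
  qed
  have SiQ: "Sinv (Q x) = Q (Sinv x)" for x
  proof -
    have "Sinv (Q x) = Sinv (Q (S (Sinv x)))" by (simp add: inv2)
    also have "\<dots> = Sinv (S (Q (Sinv x)))" by (simp add: commute[OF SS])
    finally show ?thesis by (simp add: inv1)
  qed
  have SiQm: "(Q ^^ m) (Sinv x) = Sinv ((Q ^^ m) x)" for m x
    by (rule comm_pow[symmetric]) (simp add: SiQ)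
  define r where "r = S (T p)"
  have Tp: "T p = Sinv r" by (simp add: r_def inv1)
  define tm where "tm k = smult (poly (Sinv (q k)) y / factpsi psi k) ((Q ^^ k) r)" for k
  define K where "K = {k. tm k \<noteq> 0}"
  have KD: "K \<subseteq> {..degree r}"
    unfolding K_def tm_def using vanish[of r] by (force simp: not_le[symmetric])
  then have fin: "finite K" by (rule finite_subset) simp
  have comp: "(Q ^^ m) ((Q ^^ k) x) = (Q ^^ k) ((Q ^^ m) x)" for m k x
  proof -
    have "(Q ^^ m) ((Q ^^ k) x) = (Q ^^ (m + k)) x" by (simp add: funpow_add)
    also have "\<dots> = (Q ^^ (k + m)) x" by (simp add: add.commute)
    also have "\<dots> = (Q ^^ k) ((Q ^^ m) x)" by (simp add: funpow_add)
    finally show ?thesis .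
  qed
  have "T (Epsi psi y p) = sum tm K"
  proof (rule uniq)
    fix m
    define N where "N = degree ((Q ^^ m) r) + degree r"
    have summ: "poly ((Q ^^ k) ((Q ^^ m) r)) 0 / factpsi psi k * poly (Sinv (q k)) y
        = poly ((Q ^^ m) (tm k)) 0" for k
      by (simp add: tm_def lin_smult[OF lin_pow[OF Qlin]] comp)
    have "poly ((Q ^^ m) (T (Epsi psi y p))) 0 = poly (Sinv ((Q ^^ m) r)) y"
      by (simp add: TE QpowE Tp SiQm eval_E[OF ps])
    also have "(Q ^^ m) r = (\<Sum>k\<le>N. smult (poly ((Q ^^ k) ((Q ^^ m) r)) 0 / factpsi psi k) (q k))"
      by (rule expand) (simp add: N_def)
    also have "poly (Sinv \<dots>) y = (\<Sum>k\<le>N. poly ((Q ^^ m) (tm k)) 0)"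
      by (simp add: lin_sum[OF Sil] lin_smult[OF Sil] poly_sum summ[symmetric])
    also have "\<dots> = (\<Sum>k\<in>K. poly ((Q ^^ m) (tm k)) 0)"
      by (rule sum.mono_neutral_right) (use KD in \<open>auto simp: N_def K_def lin_zero[OF lin_pow[OF Qlin]]\<close>)
    also have "\<dots> = poly ((Q ^^ m) (sum tm K)) 0"
      by (simp add: lin_sum[OF lin_pow[OF Qlin]] poly_sum)
    finally show "poly ((Q ^^ m) (T (Epsi psi y p))) 0 = poly ((Q ^^ m) (sum tm K)) 0" .
  qed
  then show ?thesis using fin unfolding Let_def K_def tm_def r_def by simp
qed

end
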